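(* Let $(X,d)$ be a compact metric space with $\dim X=0$ and $f\colon X\to X$ an equicontinuous map. Then for every $\epsilon>0$ there is $\delta>0$ such that for every sequence $(x_i)_{i\ge0}$ in $X$ with $d(f(x_i),x_{i+1})\le\delta$ for all $i\ge0$, we have $d(x_i,f^i(x_0))\le\epsilon$ for every $i\ge0$.
   Context: $f$ is equicontinuous if for every $\epsilon>0$ there is $\delta>0$ such that $d(x,y)\le\delta$ implies $\sup_{n\ge0}d(f^n(x),f^n(y))\le\epsilon$. *)

theory Defs
  imports "HOL-Analysis.Analysis"
begin

definition equicontinuous_map :: "'a::metric_space set \<Rightarrow> ('a \<Rightarrow> 'a) \<Rightarrow> bool" where
  "equicontinuous_map X f \<longleftrightarrow>
     (\<forall>e>0. \<exists>d>0. \<forall>x\<in>X. \<forall>y\<in>X. dist x y \<le> d \<longrightarrow> (\<forall>n. dist ((f ^^ n) x) ((f ^^ n) y) \<le> e))"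

text \<open>Zero (small inductive) dimension of a subspace X: X is nonempty and every point
  of X has arbitrarily small neighbourhoods (relative to X) whose boundary in X is empty,
  i.e. that are open and closed in X.\<close>
definition dim_zero :: "'a::metric_space set \<Rightarrow> bool" where
  "dim_zero X \<longleftrightarrow> X \<noteq> {} \<and>
     (\<forall>x\<in>X. \<forall>U. openin (top_of_set X) U \<and> x \<in> U \<longrightarrow>
        (\<exists>V. openin (top_of_set X) V \<and> closedin (top_of_set X) V \<and> x \<in> V \<and> V \<subseteq> U))"

end

theory Submission
  imports Defs
begin

lemma sep_compact:
  fixes S T :: "'a::metric_space set"
  assumes "compact S" "compact T" "S \<inter> T = {}"
  shows "\<exists>l>0. \<forall>x\<in>S. \<forall>y\<in>T. l \<le> dist x y"
proof (cases "S \<times> T = {}")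
  case True
  then show ?thesis by (auto intro: exI[of _ 1])
next
  case False
  have c: "compact (S \<times> T)" using assms by (simp add: compact_Times)
  have cont: "continuous_on (S \<times> T) (\<lambda>p. dist (fst p) (snd p))"
    by (intro continuous_intros)
  obtain p where p: "p \<in> S \<times> T" "\<forall>q\<in>S \<times> T. dist (fst p) (snd p) \<le> dist (fst q) (snd q)"
    using continuous_attains_inf[OF c False cont] by blast
  have "fst p \<noteq> snd p" using p(1) assms(3) by (auto simp: mem_Times_iff)
  then have pos: "dist (fst p) (snd p) > 0" by simp
  have "\<forall>x\<in>S. \<forall>y\<in>T. dist (fst p) (snd p) \<le> dist x y"
  proof (intro ballI)
    fix x y assume "x \<in> S" "y \<in> T"
    then have "(x,y) \<in> S \<times> T" by simp
    then show "dist (fst p) (snd p) \<le> dist x y" using p(2) by fastforce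
  qed
  then show ?thesis using pos by blast
qed

lemma clopen_sep:
  fixes X V :: "'a::metric_space set"
  assumes "compact X" "openin (top_of_set X) V" "closedin (top_of_set X) V"
  shows "\<exists>l>0. \<forall>x\<in>X. \<forall>y\<in>X. dist x y < l \<longrightarrow> (x \<in> V \<longleftrightarrow> y \<in> V)"
proof -
  have cV: "compact V" using closedin_compact[OF assms(1,3)] .
  have "closedin (top_of_set X) (X - V)"
    using closedin_diff[OF closedin_topspace[of "top_of_set X"] assms(2)] by simp
  then have cW: "compact (X - V)" using closedin_compact[OF assms(1)] by blast
  obtain l where l: "l > 0" "\<forall>x\<in>V. \<forall>y\<in>X - V. l \<le> dist x y"
    using sep_compact[OF cV cW] by blast
  have "\<forall>x\<in>X. \<forall>y\<in>X. dist x y < l \<longrightarrow> (x \<in> V \<longleftrightarrow> y \<in> V)"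
  proof (intro ballI impI)
    fix x y assume xy: "x \<in> X" "y \<in> X" "dist x y < l"
    show "x \<in> V \<longleftrightarrow> y \<in> V"
    proof
      assume "x \<in> V"
      show "y \<in> V"
      proof (rule ccontr)
        assume "y \<notin> V" then have "l \<le> dist x y" using l(2) \<open>x \<in> V\<close> xy by blast
        then show False using xy by simp
      qed
    next
      assume "y \<in> V"
      show "x \<in> V"
      proof (rule ccontr)
        assume "x \<notin> V" then have "l \<le> dist y x" using l(2) \<open>y \<in> V\<close> xy by blast
        then show False using xy by (simp add: dist_commute)
      qed
    qed
  qed
  with l(1) show ?thesis by blast
qed

lemma clopen_fam_sep:
  fixes X :: "'a::metric_space set"
  assumes "finite F" "compact X"
    "\<forall>V\<in>F. openin (top_of_set X) V \<and> closedin (top_of_set X) V"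
  shows "\<exists>l>0. \<forall>x\<in>X. \<forall>y\<in>X. dist x y < l \<longrightarrow> (\<forall>V\<in>F. x \<in> V \<longleftrightarrow> y \<in> V)"
  using assms
proof (induction F rule: finite_induct)
  case empty
  then show ?case by (auto intro: exI[of _ 1])
next
  case (insert V F)
  then obtain l1 where l1: "l1 > 0" "\<forall>x\<in>X. \<forall>y\<in>X. dist x y < l1 \<longrightarrow> (\<forall>V\<in>F. x \<in> V \<longleftrightarrow> y \<in> V)"
  proof -
    have "\<forall>V\<in>F. openin (top_of_set X) V \<and> closedin (top_of_set X) V" using insert.prems(2) by simp
    then show ?thesis using insert.IH insert.prems(1) that by blast
  qed
  obtain l2 where l2: "l2 > 0" "\<forall>x\<in>X. \<forall>y\<in>X. dist x y < l2 \<longrightarrow> (x \<in> V \<longleftrightarrow> y \<in> V)"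
  proof -
    have "openin (top_of_set X) V" "closedin (top_of_set X) V" using insert.prems(2) by simp_all
    then show ?thesis using clopen_sep[OF insert.prems(1)] that by blast
  qed
  have "\<forall>x\<in>X. \<forall>y\<in>X. dist x y < min l1 l2 \<longrightarrow> (\<forall>W\<in>insert V F. x \<in> W \<longleftrightarrow> y \<in> W)"
  proof (intro ballI impI)
    fix x y W assume xy: "x \<in> X" "y \<in> X" "dist x y < min l1 l2" and W: "W \<in> insert V F"
    have a: "dist x y < l1" "dist x y < l2" using xy(3) by auto
    show "x \<in> W \<longleftrightarrow> y \<in> W"
    proof (cases "W = V")
      case True then show ?thesis using l2(2) xy(1,2) a(2) by blast
    next
      case False then have "W \<in> F" using W by simp
      then show ?thesis using l1(2) xy(1,2) a(1) by blast
    qed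
  qed
  moreover have "min l1 l2 > 0" using l1(1) l2(1) by simp
  ultimately show ?case by blast
qed

theorem lemma3p2:
  fixes X :: "'a::metric_space set" and f :: "'a \<Rightarrow> 'a"
  assumes "compact X" and "dim_zero X"
    and "f ` X \<subseteq> X"
    and "equicontinuous_map X f"
  shows "\<forall>e>0. \<exists>d>0. \<forall>x::nat \<Rightarrow> 'a. (\<forall>i. x i \<in> X) \<longrightarrow>
           (\<forall>i. dist (f (x i)) (x (Suc i)) \<le> d) \<longrightarrow>
           (\<forall>i. dist (x i) ((f ^^ i) (x 0)) \<le> e)"
proof (intro allI impI)
  fix e :: real assume e: "e > 0"
  have "\<forall>z\<in>X. \<exists>V. openin (top_of_set X) V \<and> closedin (top_of_set X) V \<and> z \<in> V \<and> V \<subseteq> X \<inter> ball z (e/2)"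
  proof
    fix z assume z: "z \<in> X"
    have "openin (top_of_set X) (X \<inter> ball z (e/2))" by (simp add: openin_open_Int)
    moreover have "z \<in> X \<inter> ball z (e/2)" using z e by simp
    ultimately show "\<exists>V. openin (top_of_set X) V \<and> closedin (top_of_set X) V \<and> z \<in> V \<and> V \<subseteq> X \<inter> ball z (e/2)"
      using assms(2) z unfolding dim_zero_def by blast
  qed
  then obtain Vf where Vf: "\<And>z. z \<in> X \<Longrightarrow> openin (top_of_set X) (Vf z) \<and> closedin (top_of_set X) (Vf z) \<and> z \<in> Vf z \<and> Vf z \<subseteq> X \<inter> ball z (e/2)"
    by metis
  have "\<forall>z\<in>X. \<exists>T. open T \<and> Vf z = X \<inter> T"
    using Vf by (meson openin_open)
  then obtain Tf where Tf: "\<And>z. z \<in> X \<Longrightarrow> open (Tf z) \<and> Vf z = X \<inter> Tf z" by metis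
  have cov: "X \<subseteq> (\<Union>z\<in>X. Tf z)" using Tf Vf by blast
  obtain D where D: "D \<subseteq> X" "finite D" "X \<subseteq> (\<Union>z\<in>D. Tf z)"
    using compactE_image[OF assms(1) _ cov] Tf by metis
  define F where "F = Vf ` D"
  have Ffin: "finite F" using D F_def by simp
  have Fcl: "\<forall>V\<in>F. openin (top_of_set X) V \<and> closedin (top_of_set X) V"
    using Vf D F_def by blast
  have Fcov: "\<forall>y\<in>X. \<exists>V\<in>F. y \<in> V"
  proof
    fix y assume y: "y \<in> X"
    then obtain z where "z \<in> D" "y \<in> Tf z" using D by blast
    then show "\<exists>V\<in>F. y \<in> V" using Tf[of z] D y F_def by blast
  qed
  have Fdiam: "\<forall>V\<in>F. \<forall>a\<in>V. \<forall>b\<in>V. dist a b < e"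
  proof (intro ballI)
    fix V a b assume "V \<in> F" "a \<in> V" "b \<in> V"
    then obtain z where z: "z \<in> X" "V = Vf z" using F_def D by blast
    then have "dist z a < e/2" "dist z b < e/2" using Vf[of z] \<open>a \<in> V\<close> \<open>b \<in> V\<close> by auto
    moreover have "dist a b \<le> dist z a + dist z b"
      using dist_triangle2[of a b z] by (simp add: dist_commute)
    ultimately show "dist a b < e" by linarith
  qed
  obtain l where l: "l > 0" "\<forall>x\<in>X. \<forall>y\<in>X. dist x y < l \<longrightarrow> (\<forall>V\<in>F. x \<in> V \<longleftrightarrow> y \<in> V)"
    using clopen_fam_sep[OF Ffin assms(1) Fcl] by blast
  obtain d where d: "d > 0" "\<forall>x\<in>X. \<forall>y\<in>X. dist x y \<le> d \<longrightarrow> (\<forall>n. dist ((f ^^ n) x) ((f ^^ n) y) \<le> l/2)"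
    using assms(4) l(1) unfolding equicontinuous_map_def by (meson half_gt_zero)
  have itX: "\<And>n y. y \<in> X \<Longrightarrow> (f ^^ n) y \<in> X"
  proof -
    fix n y assume "y \<in> X" then show "(f ^^ n) y \<in> X"
      by (induction n) (use assms(3) in auto)
  qed
  define R where "R = (\<lambda>a b. \<forall>n. \<forall>V\<in>F. (f ^^ n) a \<in> V \<longleftrightarrow> (f ^^ n) b \<in> V)"
  have Rclose: "R a b" if "a \<in> X" "b \<in> X" "dist a b \<le> d" for a b
    unfolding R_def
  proof (intro allI)
    fix n
    have "dist ((f ^^ n) a) ((f ^^ n) b) \<le> l/2" using d(2) that by blast
    then have "dist ((f ^^ n) a) ((f ^^ n) b) < l" using l(1) by linarith
    then show "\<forall>V\<in>F. (f ^^ n) a \<in> V \<longleftrightarrow> (f ^^ n) b \<in> V"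
      using l(2) itX that by blast
  qed
  have Rf: "R (f a) (f b)" if "R a b" for a b
    using that unfolding R_def
    by (metis comp_apply funpow_Suc_right)
  have Rtrans: "R a c" if "R a b" "R b c" for a b c
    using that unfolding R_def by blast
  have Rsym: "R b a" if "R a b" for a b
    using that unfolding R_def by blast
  show "\<exists>d>0. \<forall>x::nat \<Rightarrow> 'a. (\<forall>i. x i \<in> X) \<longrightarrow>
           (\<forall>i. dist (f (x i)) (x (Suc i)) \<le> d) \<longrightarrow>
           (\<forall>i. dist (x i) ((f ^^ i) (x 0)) \<le> e)"
  proof (intro exI[of _ d] conjI allI impI)
    show "d > 0" using d by simp
    fix x :: "nat \<Rightarrow> 'a" and i
    assume xX: "\<forall>i. x i \<in> X" and pd: "\<forall>i. dist (f (x i)) (x (Suc i)) \<le> d"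
    have "R (x i) ((f ^^ i) (x 0))"
    proof (induction i)
      case 0
      then show ?case unfolding R_def by simp
    next
      case (Suc i)
      have "R (x (Suc i)) (f (x i))"
        using Rclose[of "x (Suc i)" "f (x i)"] xX pd assms(3) by (simp add: dist_commute image_subset_iff)
      moreover have "R (f (x i)) ((f ^^ Suc i) (x 0))" using Rf[OF Suc.IH] by simp
      ultimately show ?case using Rtrans by blast
    qed
    then have "\<forall>V\<in>F. x i \<in> V \<longleftrightarrow> (f ^^ i) (x 0) \<in> V" unfolding R_def
      by (metis funpow_0)
    moreover obtain V where "V \<in> F" "x i \<in> V" using Fcov xX by blast
    ultimately show "dist (x i) ((f ^^ i) (x 0)) \<le> e" using Fdiam by fastforce
  qed
qed

end
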